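(* Let $0<\theta<\pi$, and let $\Delta=\{z\in\mathbb{C}:|z|<1\}$. For $\zeta$ near $-1$ define \[ f(z)=\int_{-1}^{z}\frac{(\zeta+1)^{1-\theta/\pi}\left(\zeta^{2}-2\,\tfrac{\pi-\theta}{\pi+\theta}\,\zeta+1\right)^{(\pi+\theta)/(2\pi)}}{\zeta^{2}}\,d\zeta , \] the integral taken along a path in $\Delta$, with principal branches of all powers. Define \[ \xi(z)=\frac{(\sqrt{\pi}-i\sqrt{\theta})(z+1)}{2\sqrt{\pi}},\qquad \eta(z)=\frac{(\sqrt{\pi}+i\sqrt{\theta})(z+1)}{2\sqrt{\pi}}, \] \[ \varphi(z)=\left[\frac{\pi(z-1)^{2}+\theta(z+1)^{2}}{\pi+\theta}\right]^{(\pi+\theta)/(2\pi)},\qquad \psi(z)=\left[\frac{\pi(z-1)^{2}+\theta(z+1)^{2}}{\pi+\theta}\right]^{(\pi-\theta)/(2\pi)}, \] \[ \delta(z)=\left[-\sqrt{\pi}(z-1)-i\sqrt{\theta}(z+1)\right]^{(\pi-\theta)/(2\pi)}\left[-\sqrt{\pi}(z-1)+i\sqrt{\theta}(z+1)\right]^{(\pi-\theta)/(2\pi)}, \] again with principal branches. Then for all $z\in\Delta$ with $|z+1|$ sufficiently small, \begin{align*} f(z)=(z+1)^{1-\theta/\pi}\Bigg\{&-\frac{\varphi(z)}{z}+\frac{2^{\theta/\pi}\pi^{(\pi+\theta)/(2\pi)}}{2\pi^{2}+\pi\theta-\theta^{2}}\,\frac{\delta(z)}{\psi(z)}\Bigg[-2(2\pi-\theta)\,F_{1}\!\left(1-\tfrac{\theta}{\pi},\tfrac{\pi-\theta}{2\pi},\tfrac{\pi-\theta}{2\pi},2-\tfrac{\theta}{\pi};\xi(z),\eta(z)\right)\\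 &+(\pi+\theta)(z+1)\,F_{1}\!\left(2-\tfrac{\theta}{\pi},\tfrac{\pi-\theta}{2\pi},\tfrac{\pi-\theta}{2\pi},3-\tfrac{\theta}{\pi};\eta(z),\xi(z)\right)\Bigg]\Bigg\}. \end{align*}
   Context: $F_1$ denotes the Appell hypergeometric function \[ F_{1}(a,b,b',c;x,y)=\sum_{m=0}^{\infty}\sum_{n=0}^{\infty}\frac{(a)_{m+n}(b)_m(b')_n}{(c)_{m+n}\,m!\,n!}x^{m}y^{n},\qquad |x|<1,\ |y|<1, \] where $(s)_k=\Gamma(s+k)/\Gamma(s)$ is the Pochhammer symbol. Principal branches of complex powers are used throughout (all bases involved are positive real at $z=-1$). *)

theory Defs
  imports "HOL-Analysis.Analysis"
begin

text \<open>Appell hypergeometric function F1 as the double power series.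
  Complex powers below are Isabelle's complex powr, i.e. principal branch
  (z powr a = exp (a * Ln z) for z \<noteq> 0).\<close>
definition appell_F1 ::
  "complex \<Rightarrow> complex \<Rightarrow> complex \<Rightarrow> complex \<Rightarrow> complex \<Rightarrow> complex \<Rightarrow> complex" where
  "appell_F1 a b b' c x y =
     (\<Sum>m. \<Sum>n. pochhammer a (m + n) * pochhammer b m * pochhammer b' n
               / (pochhammer c (m + n) * fact m * fact n) * x ^ m * y ^ n)"

definition integrand :: "real \<Rightarrow> complex \<Rightarrow> complex" where
  "integrand \<theta> \<zeta> =
     (\<zeta> + 1) powr (of_real (1 - \<theta> / pi))
     * (\<zeta>\<^sup>2 - 2 * of_real ((pi - \<theta>) / (pi + \<theta>)) * \<zeta> + 1)
         powr (of_real ((pi + \<theta>) / (2 * pi)))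
     / \<zeta>\<^sup>2"

text \<open>f(z) = integral of the integrand from -1 to z along the straight segment
  [-1, z] (a path in the unit disc near -1), parametrised by
  \<zeta> = -1 + t (z + 1), t \<in> [0,1].\<close>
definition f_int :: "real \<Rightarrow> complex \<Rightarrow> complex" where
  "f_int \<theta> z = integral {0..1::real} (\<lambda>t. integrand \<theta> (-1 + of_real t * (z + 1)) * (z + 1))"

definition xi_fn :: "real \<Rightarrow> complex \<Rightarrow> complex" where
  "xi_fn \<theta> z = (of_real (sqrt pi) - \<i> * of_real (sqrt \<theta>)) * (z + 1) / (2 * of_real (sqrt pi))"

definition eta_fn :: "real \<Rightarrow> complex \<Rightarrow> complex" where
  "eta_fn \<theta> z = (of_real (sqrt pi) + \<i> * of_real (sqrt \<theta>)) * (z + 1) / (2 * of_real (sqrt pi))"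

definition phi_fn :: "real \<Rightarrow> complex \<Rightarrow> complex" where
  "phi_fn \<theta> z = ((of_real pi * (z - 1)\<^sup>2 + of_real \<theta> * (z + 1)\<^sup>2) / of_real (pi + \<theta>))
                    powr (of_real ((pi + \<theta>) / (2 * pi)))"

definition psi_fn :: "real \<Rightarrow> complex \<Rightarrow> complex" where
  "psi_fn \<theta> z = ((of_real pi * (z - 1)\<^sup>2 + of_real \<theta> * (z + 1)\<^sup>2) / of_real (pi + \<theta>))
                    powr (of_real ((pi - \<theta>) / (2 * pi)))"

definition delta_fn :: "real \<Rightarrow> complex \<Rightarrow> complex" where
  "delta_fn \<theta> z =
     (- of_real (sqrt pi) * (z - 1) - \<i> * of_real (sqrt \<theta>) * (z + 1)) powr (of_real ((pi - \<theta>) / (2 * pi)))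
   * (- of_real (sqrt pi) * (z - 1) + \<i> * of_real (sqrt \<theta>) * (z + 1)) powr (of_real ((pi - \<theta>) / (2 * pi)))"

end

theory Submission
  imports Defs
begin


lemma powr_mult_Re_pos:
  fixes x y a :: complex
  assumes "0 < Re x" "0 < Re y"
  shows "(x * y) powr a = x powr a * y powr a"
proof -
  have nz: "x \<noteq> 0" "y \<noteq> 0" using assms by auto
  have "\<bar>Im (Ln x)\<bar> < pi/2" "\<bar>Im (Ln y)\<bar> < pi/2" using assms Re_Ln_pos_lt_imp by auto
  then have "Ln (x*y) = Ln x + Ln y" using nz by (intro Ln_times_simple) auto
  then show ?thesis using nz by (simp add: powr_def exp_add distrib_left)
qed

definition pcr :: "real \<Rightarrow> nat \<Rightarrow> real" where
  "pcr e m = pochhammer e m / fact m"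

lemma pcr_bounds:
  assumes "0 \<le> e" "e \<le> 1"
  shows "0 \<le> pcr e m \<and> pcr e m \<le> 1"
proof (induction m)
  case 0 then show ?case by (simp add: pcr_def)
next
  case (Suc m)
  have eq: "pcr e (Suc m) = pcr e m * ((e + m) / (m + 1))"
    by (simp add: pcr_def pochhammer_rec' field_simps)
  have h: "0 \<le> (e + m) / (m + 1)" "(e + m) / (m + 1) \<le> 1" using assms by auto
  have "0 \<le> pcr e m * ((e + m) / (m + 1))" using Suc h by (intro mult_nonneg_nonneg) auto
  moreover have "pcr e m * ((e + m) / (m + 1)) \<le> 1" using Suc h mult_le_one by blast
  ultimately show ?case by (simp only: eq)
qed

definition Dg :: "real \<Rightarrow> complex \<Rightarrow> complex \<Rightarrow> nat \<Rightarrow> complex" where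
  "Dg e x y n = (\<Sum>i\<le>n. (of_real (pcr e i) * x ^ i) * (of_real (pcr e (n - i)) * y ^ (n - i)))"

lemma norm_pc_term:
  fixes x :: complex
  assumes "0 \<le> e" "e \<le> 1" "norm x \<le> r"
  shows "norm (of_real (pcr e i) * x ^ i) \<le> r ^ i"
proof -
  have "norm (of_real (pcr e i) * x ^ i) = \<bar>pcr e i\<bar> * norm x ^ i" by (simp add: norm_mult norm_power)
  also have "\<dots> \<le> 1 * r ^ i"
    using pcr_bounds[OF assms(1,2), of i] assms(3)
    by (intro mult_mono power_mono) auto
  finally show ?thesis by simp
qed

lemma summable_Suc_pow:
  fixes r :: real
  assumes "0 \<le> r" "r < 1"
  shows "summable (\<lambda>n. real (Suc n) * r ^ n)"
proof -
  have "summable (\<lambda>n. diffs (\<lambda>_. 1::real) n * r ^ n)"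
    by (rule termdiff_converges[where K=1]) (use assms in auto)
  then show ?thesis by (simp add: diffs_def)
qed

lemma norm_Dg:
  fixes x y :: complex
  assumes "0 \<le> e" "e \<le> 1" "norm x \<le> r" "norm y \<le> r"
  shows "norm (Dg e x y n) \<le> real (Suc n) * r ^ n"
proof -
  have "norm (Dg e x y n) \<le> (\<Sum>i\<le>n. r ^ i * r ^ (n - i))"
    unfolding Dg_def
  proof (rule order_trans[OF norm_sum sum_mono])
    fix i assume "i \<in> {..n}"
    have r: "0 \<le> r" using assms(3) norm_ge_zero order_trans by blast
    show "norm ((of_real (pcr e i) * x ^ i) * (of_real (pcr e (n - i)) * y ^ (n - i))) \<le> r ^ i * r ^ (n - i)"
      unfolding norm_mult[of "_ * _"]
      by (intro mult_mono norm_pc_term assms zero_le_power r norm_ge_zero)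
  qed
  also have "\<dots> = (\<Sum>i\<le>n. r ^ n)" by (intro sum.cong) (auto simp: power_add[symmetric])
  finally show ?thesis by simp
qed

lemma binom_pc_sums:
  fixes x :: complex
  assumes "norm x < 1"
  shows "(\<lambda>n. of_real (pcr e n) * x ^ n) sums ((1 - x) powr (- of_real e))"
proof -
  have "(\<lambda>n. ((- of_real e) gchoose n) * (- x) ^ n) sums ((1 + - x) powr (- of_real e))"
    by (rule gen_binomial_complex) (use assms in auto)
  moreover have "((- of_real e) gchoose n) * (- x) ^ n = of_real (pcr e n) * x ^ n" for n
  proof -
    have "((- of_real e) gchoose n) * (- x) ^ n = ((-1)^n * (-1)^n) * (pochhammer (of_real e) n / fact n) * x ^ n"
      by (simp add: gbinomial_pochhammer power_minus[of x] )
    also have "(-1::complex)^n * (-1)^n = 1" by (simp add: power_mult_distrib[symmetric])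
    finally show ?thesis by (simp add: pcr_def pochhammer_of_real)
  qed
  ultimately show ?thesis by simp
qed

lemma Dg_sums:
  fixes x y :: complex
  assumes "0 \<le> e" "e \<le> 1" "norm x < 1" "norm y < 1"
  shows "Dg e x y sums ((1 - x) powr (- of_real e) * (1 - y) powr (- of_real e))"
proof -
  have s: "summable (\<lambda>k. norm (of_real (pcr e k) * z ^ k))" if "norm z < 1" for z :: complex
    by (rule summable_comparison_test'[where g="\<lambda>k. norm z ^ k"])
       (use that in \<open>auto intro!: norm_pc_term assms\<close>)
  have "(\<lambda>k. \<Sum>i\<le>k. (of_real (pcr e i) * x ^ i) * (of_real (pcr e (k - i)) * y ^ (k - i))) sums
        ((\<Sum>k. of_real (pcr e k) * x ^ k) * (\<Sum>k. of_real (pcr e k) * y ^ k))"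
    by (rule Cauchy_product_sums[OF s s]) (use assms in auto)
  moreover have "Dg e x y = (\<lambda>k. \<Sum>i\<le>k. (of_real (pcr e i) * x ^ i) * (of_real (pcr e (k - i)) * y ^ (k - i)))"
    by (simp add: fun_eq_iff Dg_def)
  ultimately show ?thesis
    using binom_pc_sums[OF assms(3), of e] binom_pc_sums[OF assms(4), of e]
    by (simp add: sums_iff)
qed



lemma poch_ratio:
  fixes \<alpha> :: real
  assumes "0 < \<alpha>"
  shows "pochhammer \<alpha> k / pochhammer (\<alpha> + 1) k = \<alpha> / (\<alpha> + k)"
proof -
  have "pochhammer \<alpha> (Suc k) = \<alpha> * pochhammer (\<alpha> + 1) k" by (rule pochhammer_rec)
  moreover have "pochhammer \<alpha> (Suc k) = (\<alpha> + k) * pochhammer \<alpha> k" by (rule pochhammer_rec')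
  moreover have "0 < pochhammer (\<alpha> + 1) k" using assms by (intro pochhammer_pos) auto
  moreover have "0 < \<alpha> + k" using assms by simp
  ultimately show ?thesis by (simp add: field_simps)
qed

lemma F1_diag:
  fixes \<alpha> e :: real and X Y :: complex
  assumes a: "0 < \<alpha>" and e: "0 \<le> e" "e \<le> 1" and XY: "norm X < 1" "norm Y < 1"
  shows "appell_F1 (of_real \<alpha>) (of_real e) (of_real e) (of_real \<alpha> + 1) X Y
         = (\<Sum>n. of_real (\<alpha> / (\<alpha> + n)) * Dg e X Y n)"
proof -
  define f :: "nat \<times> nat \<Rightarrow> complex" where
    "f = (\<lambda>(m,n). of_real (\<alpha> / (\<alpha> + real (m + n))) * ((of_real (pcr e m) * X^m) * (of_real (pcr e n) * Y^n)))"
  have trm: "pochhammer (of_real \<alpha>) (m + n) * pochhammer (of_real e) m * pochhammer (of_real e) n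
               / (pochhammer (of_real \<alpha> + 1) (m + n) * fact m * fact n) * X ^ m * Y ^ n = f (m, n)" for m n
  proof -
    have r: "pochhammer (of_real \<alpha>) (m + n) / pochhammer (of_real \<alpha> + 1) (m + n)
           = (of_real (\<alpha> / (\<alpha> + real (m + n))) :: complex)"
    proof -
      have "of_real \<alpha> + (1::complex) = of_real (\<alpha> + 1)" by simp
      then have "pochhammer (of_real \<alpha> + 1) (m + n) = (of_real (pochhammer (\<alpha> + 1) (m + n)) :: complex)"
        by (simp only: pochhammer_of_real)
      then show ?thesis using poch_ratio[OF a, of "m+n"]
        by (simp only: pochhammer_of_real of_real_divide[symmetric])
    qed
    have "pochhammer (of_real \<alpha>) (m + n) * pochhammer (of_real e) m * pochhammer (of_real e) n
               / (pochhammer (of_real \<alpha> + 1) (m + n) * fact m * fact n) * X ^ m * Y ^ n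
          = (pochhammer (of_real \<alpha>) (m + n) / pochhammer (of_real \<alpha> + 1) (m + n))
            * ((pochhammer (of_real e) m / fact m) * X ^ m) * ((pochhammer (of_real e) n / fact n) * Y ^ n)"
      by (simp add: divide_inverse inverse_mult_distrib mult_ac)
    then show ?thesis by (simp only: r) (simp add: f_def pcr_def pochhammer_of_real mult_ac)
  qed
  define \<rho> where "\<rho> = max (norm X) (norm Y)"
  have \<rho>: "0 \<le> \<rho>" "\<rho> < 1" "norm X \<le> \<rho>" "norm Y \<le> \<rho>" using XY by (auto simp: \<rho>_def le_max_iff_disj)
  have bnd: "norm (f (m, n)) \<le> \<rho> ^ (m + n)" for m n
  proof -
    have c: "\<bar>\<alpha> / (\<alpha> + real (m + n))\<bar> \<le> 1" using a by auto
    have "norm (f (m, n)) = \<bar>\<alpha> / (\<alpha> + real (m + n))\<bar> * (norm (of_real (pcr e m) * X^m) * norm (of_real (pcr e n) * Y^n))"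
      by (simp only: f_def case_prod_conv norm_mult norm_of_real)
    also have "\<dots> \<le> 1 * (\<rho> ^ m * \<rho> ^ n)"
      by (intro mult_mono c norm_pc_term e \<rho> zero_le_power mult_nonneg_nonneg norm_ge_zero) auto
    finally show ?thesis by (simp add: power_add)
  qed
  define G :: "nat \<times> nat \<Rightarrow> nat \<times> nat" where "G = (\<lambda>(k, i). (i, k - i))"
  have bij: "bij_betw G (Sigma UNIV (\<lambda>k. {..k})) UNIV"
    by (rule bij_betwI[where g="\<lambda>(m, n). (m + n, m)"]) (auto simp: G_def)
  have diag_norm_sum: "summable (\<lambda>k. \<Sum>i\<le>k. norm (f (G (k, i))))"
  proof (rule summable_comparison_test'[OF summable_Suc_pow[OF \<rho>(1,2)]])
    fix k
    have "(\<Sum>i\<le>k. norm (f (G (k, i)))) \<le> (\<Sum>i\<le>k. \<rho> ^ k)"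
    proof (intro sum_mono)
      fix i assume "i \<in> {..k}"
      then have "i + (k - i) = k" by auto
      then show "norm (f (G (k, i))) \<le> \<rho> ^ k" using bnd[of i "k - i"] by (simp add: G_def)
    qed
    then show "norm (\<Sum>i\<le>k. norm (f (G (k, i)))) \<le> real (Suc k) * \<rho> ^ k"
      by (simp add: sum_nonneg)
  qed
  have abs: "(\<lambda>p. norm (f (G p))) summable_on Sigma UNIV (\<lambda>k. {..k})"
  proof (rule summable_on_SigmaI[where g="\<lambda>k. \<Sum>i\<le>k. norm (f (G (k, i)))"])
    show "((\<lambda>i. norm (f (G (k, i)))) has_sum (\<Sum>i\<le>k. norm (f (G (k, i))))) {..k}" for k
      by (rule has_sum_finite) simp
    show "(\<lambda>k. \<Sum>i\<le>k. norm (f (G (k, i)))) summable_on UNIV"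
      using diag_norm_sum by (subst summable_on_UNIV_nonneg_real_iff) (auto intro: sum_nonneg)
  qed auto
  then have "(\<lambda>p. f (G p)) summable_on Sigma UNIV (\<lambda>k. {..k})"
    by (simp add: summable_on_iff_abs_summable_on_complex)
  then obtain S where S: "((\<lambda>p. f (G p)) has_sum S) (Sigma UNIV (\<lambda>k. {..k}))"
    using summable_on_def by blast
  have diag: "((\<lambda>k. \<Sum>i\<le>k. f (G (k, i))) has_sum S) UNIV"
    by (rule has_sum_SigmaD[OF S]) (rule has_sum_finite, simp)
  have full: "(f has_sum S) (Sigma UNIV (\<lambda>_. UNIV))"
    using S has_sum_reindex_bij_betw[OF bij, of f S] by simp
  have rows: "((\<lambda>n. f (m, n)) has_sum (\<Sum>n. f (m, n))) UNIV" for m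
  proof -
    have "summable (\<lambda>n. norm (f (m, n)))"
    proof (rule summable_comparison_test'[where g="\<lambda>n. \<rho> ^ m * \<rho> ^ n"])
      show "summable (\<lambda>n. \<rho> ^ m * \<rho> ^ n)" using \<rho> by (intro summable_mult summable_geometric) auto
      show "norm (norm (f (m, n))) \<le> \<rho> ^ m * \<rho> ^ n" for n using bnd[of m n] by (simp add: power_add)
    qed
    note ns = this
    have "(\<lambda>n. f (m, n)) sums (\<Sum>n. f (m, n))" by (rule summable_sums[OF summable_norm_cancel[OF ns]])
    then show ?thesis by (rule norm_summable_imp_has_sum[OF ns])
  qed
  have "((\<lambda>m. \<Sum>n. f (m, n)) has_sum S) UNIV"
    by (rule has_sum_SigmaD[OF full rows])
  then have 1: "(\<lambda>m. \<Sum>n. f (m, n)) sums S" by (rule has_sum_imp_sums)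
  have 2: "(\<lambda>k. \<Sum>i\<le>k. f (G (k, i))) sums S" using diag by (rule has_sum_imp_sums)
  have "appell_F1 (of_real \<alpha>) (of_real e) (of_real e) (of_real \<alpha> + 1) X Y = (\<Sum>m. \<Sum>n. f (m, n))"
    unfolding appell_F1_def trm ..
  also have "\<dots> = S" using 1 by (simp add: sums_iff)
  also have "\<dots> = (\<Sum>k. \<Sum>i\<le>k. f (G (k, i)))" using 2 by (simp add: sums_iff)
  also have "\<dots> = (\<Sum>n. of_real (\<alpha> / (\<alpha> + n)) * Dg e X Y n)"
    by (intro suminf_cong) (simp add: Dg_def G_def f_def sum_distrib_left)
  finally show ?thesis .
qed



definition Sg :: "real \<Rightarrow> real \<Rightarrow> complex \<Rightarrow> complex \<Rightarrow> complex \<Rightarrow> complex" where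
  "Sg \<alpha> e x y u = (\<Sum>n. (of_real (\<alpha> / (\<alpha> + real n)) * Dg e x y n) * u ^ n)"

lemma Dg_scale: "Dg e (x * u) (y * u) n = Dg e x y n * u ^ n"
proof -
  have "Dg e (x * u) (y * u) n = (\<Sum>i\<le>n. ((of_real (pcr e i) * x ^ i) * (of_real (pcr e (n - i)) * y ^ (n - i))) * (u ^ i * u ^ (n - i)))"
    unfolding Dg_def by (intro sum.cong) (auto simp: power_mult_distrib mult_ac)
  also have "\<dots> = (\<Sum>i\<le>n. ((of_real (pcr e i) * x ^ i) * (of_real (pcr e (n - i)) * y ^ (n - i))) * u ^ n)"
    by (intro sum.cong) (auto simp: power_add[symmetric])
  finally show ?thesis by (simp add: Dg_def sum_distrib_right)
qed

lemma F1_Sg: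
  fixes \<alpha> e :: real and x y u :: complex
  assumes a: "0 < \<alpha>" and e: "0 \<le> e" "e \<le> 1" and XY: "norm (x * u) < 1" "norm (y * u) < 1"
  shows "appell_F1 (of_real \<alpha>) (of_real e) (of_real e) (of_real \<alpha> + 1) (x * u) (y * u) = Sg \<alpha> e x y u"
  unfolding F1_diag[OF a e XY] Sg_def Dg_scale by (simp add: mult_ac)

lemma Sg_deriv:
  fixes \<alpha> e :: real and x y u :: complex
  assumes a: "0 < \<alpha>" and e: "0 \<le> e" "e \<le> 1" and xy: "norm x < 1" "norm y < 1" and u: "norm u < 1"
  shows "\<exists>S'. (Sg \<alpha> e x y has_field_derivative S') (at u) \<and>
           of_real \<alpha> * Sg \<alpha> e x y u + u * S'
             = of_real \<alpha> * ((1 - x * u) powr (- of_real e) * (1 - y * u) powr (- of_real e))"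
proof -
  define c where "c n = of_real (\<alpha> / (\<alpha> + n)) * Dg e x y n" for n
  define \<rho> where "\<rho> = max (norm x) (norm y)"
  have \<rho>: "0 \<le> \<rho>" "\<rho> < 1" "norm x \<le> \<rho>" "norm y \<le> \<rho>" using xy by (auto simp: \<rho>_def le_max_iff_disj)
  have cb: "norm (c n) \<le> real (Suc n) * \<rho> ^ n" for n
  proof -
    have "norm (c n) = \<bar>\<alpha> / (\<alpha> + n)\<bar> * norm (Dg e x y n)" by (simp only: c_def norm_mult norm_of_real)
    also have "\<dots> \<le> 1 * (real (Suc n) * \<rho> ^ n)"
      using a by (intro mult_mono norm_Dg e \<rho>) auto
    finally show ?thesis by simp
  qed
  have sm: "summable (\<lambda>n. c n * z ^ n)" if "norm z < 1" for z
  proof (rule summable_comparison_test'[OF summable_Suc_pow[OF \<rho>(1,2)]])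
    fix n
    have "norm (c n * z ^ n) \<le> (real (Suc n) * \<rho> ^ n) * 1"
      unfolding norm_mult norm_power
      using that \<rho> by (intro mult_mono cb power_le_one) auto
    then show "norm (c n * z ^ n) \<le> real (Suc n) * \<rho> ^ n" by simp
  qed
  have Sg_eq: "Sg \<alpha> e x y = (\<lambda>z. \<Sum>n. c n * z ^ n)" by (simp add: Sg_def c_def fun_eq_iff)
  define S' where "S' = (\<Sum>n. diffs c n * u ^ n)"
  have der: "(Sg \<alpha> e x y has_field_derivative S') (at u)"
    unfolding Sg_eq S'_def by (rule termdiffs_strong'[where K=1]) (use sm u in auto)
  have sd: "summable (\<lambda>n. diffs c n * u ^ n)"
    by (rule termdiff_converges[where K=1]) (use sm u in auto)
  define g where "g n = of_nat n * c n * u ^ n" for n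
  have "(\<lambda>n. u * (diffs c n * u ^ n)) sums (u * S')"
    unfolding S'_def by (intro sums_mult summable_sums sd)
  moreover have "(\<lambda>n. u * (diffs c n * u ^ n)) = (\<lambda>n. g (Suc n))"
    by (simp add: fun_eq_iff g_def diffs_def mult_ac)
  ultimately have "(\<lambda>n. g (Suc n)) sums (u * S')" by simp
  then have gs: "g sums (u * S')" by (subst (asm) sums_Suc_iff) (simp add: g_def)
  have as: "(\<lambda>n. of_real \<alpha> * (c n * u ^ n)) sums (of_real \<alpha> * Sg \<alpha> e x y u)"
    unfolding Sg_eq by (intro sums_mult summable_sums sm u)
  have "(\<lambda>n. of_real \<alpha> * (c n * u ^ n) + g n) sums (of_real \<alpha> * Sg \<alpha> e x y u + u * S')"
    by (rule sums_add[OF as gs])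
  moreover have "of_real \<alpha> * (c n * u ^ n) + g n = of_real \<alpha> * (Dg e x y n * u ^ n)" for n
  proof -
    have ne: "(of_real \<alpha> + of_nat n :: complex) \<noteq> 0"
    proof -
      have "(of_real \<alpha> + of_nat n :: complex) = of_real (\<alpha> + n)" by simp
      moreover have "\<alpha> + n \<noteq> 0" using a by linarith
      ultimately show ?thesis by (metis of_real_eq_0_iff)
    qed
    have "of_real \<alpha> * (c n * u ^ n) + g n = (of_real \<alpha> + of_nat n) * (of_real \<alpha> / (of_real \<alpha> + of_nat n)) * (Dg e x y n * u ^ n)"
      by (simp add: c_def g_def algebra_simps add_divide_distrib)
    also have "\<dots> = of_real \<alpha> * (Dg e x y n * u ^ n)" using ne by simp
    finally show ?thesis .
  qed
  ultimately have s1: "(\<lambda>n. of_real \<alpha> * (Dg e x y n * u ^ n)) sums (of_real \<alpha> * Sg \<alpha> e x y u + u * S')"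
    by simp
  have xu: "norm (x * u) < 1" "norm (y * u) < 1"
  proof -
    have "norm x * norm u < 1 * 1" by (rule mult_strict_mono) (use xy u in auto)
    moreover have "norm y * norm u < 1 * 1" by (rule mult_strict_mono) (use xy u in auto)
    ultimately
    show "norm (x * u) < 1" "norm (y * u) < 1" by (auto simp: norm_mult)
  qed
  have "(\<lambda>n. Dg e (x * u) (y * u) n) sums ((1 - x * u) powr (- of_real e) * (1 - y * u) powr (- of_real e))"
    by (rule Dg_sums[OF e xu])
  then have s2: "(\<lambda>n. of_real \<alpha> * (Dg e x y n * u ^ n)) sums (of_real \<alpha> * ((1 - x * u) powr (- of_real e) * (1 - y * u) powr (- of_real e)))"
    unfolding Dg_scale by (rule sums_mult)
  show ?thesis using der sums_unique2[OF s1 s2] by blast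
qed



definition aa :: "real \<Rightarrow> real" where "aa \<theta> = 1 - \<theta> / pi"
definition ee :: "real \<Rightarrow> real" where "ee \<theta> = (pi - \<theta>) / (2 * pi)"
definition bb :: "real \<Rightarrow> real" where "bb \<theta> = (pi + \<theta>) / (2 * pi)"
definition l1 :: "real \<Rightarrow> complex" where "l1 \<theta> = Complex (1/2) (- (sqrt \<theta> / (2 * sqrt pi)))"
definition l2 :: "real \<Rightarrow> complex" where "l2 \<theta> = Complex (1/2) (sqrt \<theta> / (2 * sqrt pi))"
definition Qf :: "real \<Rightarrow> complex \<Rightarrow> complex" where
  "Qf \<theta> u = (of_real pi * ((u - 1) - 1)\<^sup>2 + of_real \<theta> * ((u - 1) + 1)\<^sup>2) / of_real (pi + \<theta>)"
definition CC :: "real \<Rightarrow> real" where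
  "CC \<theta> = 2 powr (\<theta> / pi) * pi powr ((pi + \<theta>) / (2 * pi)) / (2 * pi\<^sup>2 + pi * \<theta> - \<theta>\<^sup>2)"
definition KK :: "real \<Rightarrow> complex" where
  "KK \<theta> = of_real (CC \<theta> * (pi + \<theta>) powr ee \<theta>)"
definition BB :: "real \<Rightarrow> complex \<Rightarrow> complex" where
  "BB \<theta> u = - (Qf \<theta> u powr of_real (bb \<theta>) / (u - 1))
     + KK \<theta> * ((- 2 * of_real (2 * pi - \<theta>)) * Sg (aa \<theta>) (ee \<theta>) (l1 \<theta>) (l2 \<theta>) u
               + of_real (pi + \<theta>) * (u * Sg (aa \<theta> + 1) (ee \<theta>) (l2 \<theta>) (l1 \<theta>) u))"

locale th =
  fixes \<theta> :: real
  assumes pos: "0 < \<theta>" and lt: "\<theta> < pi"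
begin

lemma basics: "0 < aa \<theta>" "0 \<le> ee \<theta>" "ee \<theta> \<le> 1" "bb \<theta> = 1 - ee \<theta>" "aa \<theta> = 2 * ee \<theta>"
  using pos lt pi_gt_zero by (auto simp: aa_def ee_def bb_def field_simps)

lemma norm_l: "norm (l1 \<theta>) < 3/4" "norm (l2 \<theta>) < 3/4"
proof -
  have "(sqrt \<theta> / (2 * sqrt pi))\<^sup>2 = \<theta> / (4 * pi)"
    using pos by (simp add: power_divide power_mult_distrib)
  also have "\<dots> < 1/4" using lt pi_gt_zero by (simp add: field_simps)
  finally have s: "(sqrt \<theta> / (2 * sqrt pi))\<^sup>2 < 1/4" .
  have "(1/2::real)\<^sup>2 = 1/4" "(3/4::real)\<^sup>2 = 9/16" by (simp_all add: power2_eq_square)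
  then have h: "(1/2)\<^sup>2 + (sqrt \<theta> / (2 * sqrt pi))\<^sup>2 < (3/4)\<^sup>2" using s by linarith
  have "norm (l1 \<theta>) = sqrt ((1/2)\<^sup>2 + (sqrt \<theta> / (2 * sqrt pi))\<^sup>2)"
    by (simp only: l1_def complex_norm power2_minus)
  also have "\<dots> < sqrt ((3/4)\<^sup>2)" using h by (subst real_sqrt_less_iff) simp
  finally show "norm (l1 \<theta>) < 3/4" by simp
  have "norm (l2 \<theta>) = sqrt ((1/2)\<^sup>2 + (sqrt \<theta> / (2 * sqrt pi))\<^sup>2)"
    by (simp only: l2_def complex_norm)
  also have "\<dots> < sqrt ((3/4)\<^sup>2)" using h by (subst real_sqrt_less_iff) simp
  finally show "norm (l2 \<theta>) < 3/4" by simp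
qed

lemma l_sum_prod: "l1 \<theta> + l2 \<theta> = 1" "l1 \<theta> * l2 \<theta> = of_real ((pi + \<theta>) / (4 * pi))"
proof -
  show "l1 \<theta> + l2 \<theta> = 1" by (simp add: l1_def l2_def complex_eq_iff)
  have "(sqrt \<theta> / (2 * sqrt pi)) * (sqrt \<theta> / (2 * sqrt pi)) = \<theta> / (4 * pi)"
    using pos by (simp add: field_simps)
  then show "l1 \<theta> * l2 \<theta> = of_real ((pi + \<theta>) / (4 * pi))"
    using pi_gt_zero by (simp add: l1_def l2_def complex_eq_iff field_simps)
qed

lemma factor: "(1 - l1 \<theta> * u) * (1 - l2 \<theta> * u) = of_real ((pi + \<theta>) / (4 * pi)) * Qf \<theta> u"
proof -
  have "(1 - l1 \<theta> * u) * (1 - l2 \<theta> * u) = 1 - (l1 \<theta> + l2 \<theta>) * u + (l1 \<theta> * l2 \<theta>) * u\<^sup>2"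
    by (simp add: algebra_simps power2_eq_square)
  also have "\<dots> = 1 - u + of_real ((pi + \<theta>) / (4 * pi)) * u\<^sup>2" by (simp add: l_sum_prod)
  also have "\<dots> = of_real ((pi + \<theta>) / (4 * pi)) * Qf \<theta> u"
  proof -
    have ne: "(of_real pi :: complex) \<noteq> 0" "(of_real pi + of_real \<theta> :: complex) \<noteq> 0"
    proof -
      have "pi + \<theta> > 0" using pos pi_gt_zero by linarith
      then show "(of_real pi :: complex) \<noteq> 0" "(of_real pi + of_real \<theta> :: complex) \<noteq> 0"
        using pi_gt_zero by (auto simp flip: of_real_add)
    qed
    define p where "p = (of_real pi :: complex)"
    define t where "t = (of_real \<theta> :: complex)"
    have c: "of_real ((pi + \<theta>) / (4 * pi)) = (p + t) / (4 * p)" by (simp add: p_def t_def)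
    have q: "Qf \<theta> u = (p * (u - 2)\<^sup>2 + t * u\<^sup>2) / (p + t)"
      by (simp add: Qf_def p_def t_def algebra_simps)
    have "(p + t) / (4 * p) * ((p * (u - 2)\<^sup>2 + t * u\<^sup>2) / (p + t)) = (p * (u - 2)\<^sup>2 + t * u\<^sup>2) / (4 * p)"
      using ne by (simp add: p_def t_def)
    also have "\<dots> = 1 - u + (p + t) / (4 * p) * u\<^sup>2"
      using ne by (simp add: p_def[symmetric] field_simps power2_eq_square)
    finally show ?thesis by (simp only: c q)
  qed
  finally show ?thesis .
qed

end


lemma poly_id:
  fixes p t u :: complex
  assumes p: "p \<noteq> 0" and q: "p + t \<noteq> 0"
  shows "- ((p - t) / p) * ((p * (u - 2)\<^sup>2 + t * u\<^sup>2) / (p + t))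
         - u * ((p + t) / (2 * p)) * ((2 * p * (u - 2) + 2 * t * u) / (p + t))
         + (- (4 * (p - t)) / (p + t) + 2 * u) * (u - 1) = 0"
proof -
  define A1 where "A1 = ((p - t) / p) * ((p * (u - 2)\<^sup>2 + t * u\<^sup>2) / (p + t))"
  define A2 where "A2 = (p + t) / (2 * p) * ((2 * p * (u - 2) + 2 * t * u) / (p + t))"
  define A3 where "A3 = - (4 * (p - t)) / (p + t)"
  have h1: "A1 * (p * (p + t)) = (p - t) * (p * (u - 2)\<^sup>2 + t * u\<^sup>2)" using p q by (simp add: A1_def)
  have m: "2 * p * (u - 2) + 2 * t * u = 2 * (p * (u - 2) + t * u)" by (simp add: algebra_simps)
  have h2: "A2 * p = p * (u - 2) + t * u" unfolding A2_def m using p q by simp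
  have h3: "A3 * (p + t) = - (4 * (p - t))" using q by (simp add: A3_def)
  have "(- A1 - u * A2 + (A3 + 2 * u) * (u - 1)) * (p * (p + t)) = 0"
    using h1 h2 h3 unfolding power2_eq_square by algebra
  then have "- A1 - u * A2 + (A3 + 2 * u) * (u - 1) = 0" using p q by simp
  then show ?thesis unfolding A1_def A2_def A3_def by (simp only: mult.assoc mult_minus_left)
qed

context th begin

lemma pi_facts: "0 < pi + \<theta>" "0 < 2 * pi - \<theta>" "2 * pi\<^sup>2 + pi * \<theta> - \<theta>\<^sup>2 = (2 * pi - \<theta>) * (pi + \<theta>)"
  using pos lt pi_gt_zero by (auto simp: power2_eq_square algebra_simps)

lemma Kconst: "CC \<theta> * (pi + \<theta>) powr ee \<theta> * ((pi + \<theta>) / (4 * pi)) powr (- ee \<theta>)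
               = 2 * pi / ((pi + \<theta>) * (2 * pi - \<theta>))"
proof -
  have p: "0 < pi" "0 < pi + \<theta>" "0 < 2 * pi - \<theta>" using pi_facts pi_gt_zero by auto
  have "(pi + \<theta>) powr ee \<theta> * ((pi + \<theta>) / (4 * pi)) powr (- ee \<theta>) = (4 * pi) powr ee \<theta>"
    using p by (simp add: powr_divide powr_minus field_simps)
  also have "\<dots> = 2 powr (2 * ee \<theta>) * pi powr ee \<theta>"
  proof -
    have "(4::real) = 2 powr 2" by simp
    then have "(4::real) powr ee \<theta> = 2 powr (2 * ee \<theta>)" by (metis powr_powr)
    then show ?thesis by (simp add: powr_mult)
  qed
  finally have 1: "(pi + \<theta>) powr ee \<theta> * ((pi + \<theta>) / (4 * pi)) powr (- ee \<theta>) = 2 powr (2 * ee \<theta>) * pi powr ee \<theta>" .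
  have 2: "2 powr (\<theta> / pi) * 2 powr (2 * ee \<theta>) = 2"
    using p by (simp add: powr_add[symmetric] ee_def field_simps)
  have 3: "pi powr ((pi + \<theta>) / (2 * pi)) * pi powr ee \<theta> = pi"
    using p by (simp add: powr_add[symmetric] ee_def field_simps)
  have "CC \<theta> * (pi + \<theta>) powr ee \<theta> * ((pi + \<theta>) / (4 * pi)) powr (- ee \<theta>)
        = (2 powr (\<theta> / pi) * 2 powr (2 * ee \<theta>)) * (pi powr ((pi + \<theta>) / (2 * pi)) * pi powr ee \<theta>)
          / ((2 * pi - \<theta>) * (pi + \<theta>))"
    unfolding CC_def pi_facts(3) mult.assoc 1 by (simp add: mult_ac)
  also have "\<dots> = 2 * pi / ((2 * pi - \<theta>) * (pi + \<theta>))" by (simp only: 2 3)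
  also have "\<dots> = 2 * pi / ((pi + \<theta>) * (2 * pi - \<theta>))" by (simp only: mult.commute)
  finally show ?thesis .
qed

lemma Qf_Re:
  assumes "norm u < 1/4"
  shows "0 < Re (Qf \<theta> u)"
proof -
  define c where "c = 4 * pi / (pi + \<theta>)"
  have c: "2 < c" using pos lt pi_gt_zero by (simp add: c_def field_simps)
  have "Qf \<theta> u = of_real c * (1 - u) + u\<^sup>2"
  proof -
    have ne: "(of_real pi + of_real \<theta> :: complex) \<noteq> 0" using pi_facts by (auto simp flip: of_real_add)
    show ?thesis using ne unfolding Qf_def c_def
      by (simp add: field_simps power2_eq_square)
  qed
  then have "Re (Qf \<theta> u) = c * (1 - Re u) + Re (u\<^sup>2)" by simp
  moreover have "Re u \<le> 1/4" using assms complex_Re_le_cmod[of u] by linarith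
  moreover have "- (1/16) \<le> Re (u\<^sup>2)"
  proof -
    have "norm (u\<^sup>2) \<le> (1/4)\<^sup>2" unfolding norm_power using assms by (intro power_mono) auto
    then show ?thesis using abs_Re_le_cmod[of "u\<^sup>2"] by (simp add: power2_eq_square)
  qed
  moreover have "c * (1 - Re u) \<ge> 2 * (3/4)" using c \<open>Re u \<le> 1/4\<close> by (intro mult_mono) auto
  ultimately show ?thesis by linarith
qed

lemma Re_one_minus:
  assumes "norm l < 3/4" "norm u < 1/4"
  shows "0 < Re (1 - l * u)"
proof -
  have "norm (l * u) \<le> 3/4 * (1/4)" unfolding norm_mult using assms by (intro mult_mono) auto
  then show ?thesis using complex_Re_le_cmod[of "l * u"] by simp
qed

lemma P_eq:
  assumes "norm u < 1/4"
  shows "(1 - l1 \<theta> * u) powr (- of_real (ee \<theta>)) * (1 - l2 \<theta> * u) powr (- of_real (ee \<theta>))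
         = of_real (((pi + \<theta>) / (4 * pi)) powr (- ee \<theta>)) * Qf \<theta> u powr (- of_real (ee \<theta>))"
proof -
  have "(1 - l1 \<theta> * u) powr (- of_real (ee \<theta>)) * (1 - l2 \<theta> * u) powr (- of_real (ee \<theta>))
        = ((1 - l1 \<theta> * u) * (1 - l2 \<theta> * u)) powr (- of_real (ee \<theta>))"
    by (rule powr_mult_Re_pos[symmetric]) (use Re_one_minus norm_l assms in auto)
  also have "\<dots> = of_real ((pi + \<theta>) / (4 * pi)) powr (- of_real (ee \<theta>)) * Qf \<theta> u powr (- of_real (ee \<theta>))"
    unfolding factor using pi_facts pi_gt_zero by (intro powr_times_real_left) auto
  also have "of_real ((pi + \<theta>) / (4 * pi)) powr (- of_real (ee \<theta>)) = (of_real (((pi + \<theta>) / (4 * pi)) powr (- ee \<theta>)) :: complex)"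
  proof -
    have nn: "0 \<le> (pi + \<theta>) / (4 * pi)" using pi_facts pi_gt_zero by simp
    show ?thesis unfolding of_real_minus[symmetric] by (rule powr_of_real[OF nn])
  qed
  finally show ?thesis .
qed

end


lemma final_alg:
  fixes a a1 b u Q Qd E S1 S1' S2 S2' K MC KMC c1 c2 :: complex
  assumes u1: "u - 1 \<noteq> 0"
    and a1: "a1 = a + 1"
    and hS1: "a * S1 + u * S1' = a * (MC * E)"
    and hS2: "a1 * S2 + u * S2' = a1 * (MC * E)"
    and hK: "K * MC = KMC"
    and hP: "- a * Q - u * b * Qd + (KMC * (c1 * a) + KMC * (c2 * a1) * u) * (u - 1) = 0"
  shows "a * (- (Q * E / (u - 1)) + K * (c1 * S1 + c2 * (u * S2)))
       + u * (- ((b * E * Qd * (u - 1) - Q * E * (1 - 0)) / ((u - 1) * (u - 1)))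
              + K * (c1 * S1' + c2 * (1 * S2 + S2' * u)))
       = u * (Q * E) / (u - 1)\<^sup>2"
proof -
  have s: "a * (K * (c1 * S1 + c2 * (u * S2))) + u * (K * (c1 * S1' + c2 * (1 * S2 + S2' * u)))
        = K * (c1 * (a * S1 + u * S1') + c2 * u * (a1 * S2 + u * S2'))"
    by (simp add: a1 algebra_simps)
  also have "\<dots> = KMC * E * (c1 * a + c2 * a1 * u)"
    unfolding hS1 hS2 by (simp add: hK[symmetric] algebra_simps)
  finally have s: "a * (K * (c1 * S1 + c2 * (u * S2))) + u * (K * (c1 * S1' + c2 * (1 * S2 + S2' * u)))
      = KMC * E * (c1 * a + c2 * a1 * u)" .
  have r: "a * (- (Q * E / (u - 1))) + u * (- ((b * E * Qd * (u - 1) - Q * E * (1 - 0)) / ((u - 1) * (u - 1))))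
       = E * (- a * Q - u * b * Qd) / (u - 1) + u * (Q * E) / (u - 1)\<^sup>2"
  proof -
    have g: "\<And>v. v \<noteq> 0 \<Longrightarrow> a * (- (Q * E / v)) + u * (- ((b * E * Qd * v - Q * E * (1 - 0)) / (v * v)))
       = E * (- a * Q - u * b * Qd) / v + u * (Q * E) / v\<^sup>2"
      by (simp add: field_simps power2_eq_square)
    show ?thesis by (rule g[OF u1])
  qed
  have z: "E * (- a * Q - u * b * Qd) / (u - 1) + KMC * E * (c1 * a + c2 * a1 * u) = 0"
  proof -
    have "E * (- a * Q - u * b * Qd) / (u - 1) + KMC * E * (c1 * a + c2 * a1 * u)
        = E * ((- a * Q - u * b * Qd + (KMC * (c1 * a) + KMC * (c2 * a1) * u) * (u - 1)) / (u - 1))"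
    proof -
      have g: "\<And>v. v \<noteq> 0 \<Longrightarrow> E * (- a * Q - u * b * Qd) / v + KMC * E * (c1 * a + c2 * a1 * u)
        = E * ((- a * Q - u * b * Qd + (KMC * (c1 * a) + KMC * (c2 * a1) * u) * v) / v)"
        by (simp add: field_simps)
      show ?thesis by (rule g[OF u1])
    qed
    then show ?thesis using hP by simp
  qed
  have "a * (- (Q * E / (u - 1)) + K * (c1 * S1 + c2 * (u * S2)))
       + u * (- ((b * E * Qd * (u - 1) - Q * E * (1 - 0)) / ((u - 1) * (u - 1)))
              + K * (c1 * S1' + c2 * (1 * S2 + S2' * u)))
      = (a * (- (Q * E / (u - 1))) + u * (- ((b * E * Qd * (u - 1) - Q * E * (1 - 0)) / ((u - 1) * (u - 1)))))
        + (a * (K * (c1 * S1 + c2 * (u * S2))) + u * (K * (c1 * S1' + c2 * (1 * S2 + S2' * u))))"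
    by (simp only: distrib_left add_ac)
  also have "\<dots> = u * (Q * E) / (u - 1)\<^sup>2" unfolding r s using z by (simp add: algebra_simps)
  finally show ?thesis .
qed

context th begin

lemma notnonpos: "0 < Re z \<Longrightarrow> z \<notin> \<real>\<^sub>\<le>\<^sub>0"
  by (auto simp: nonpos_Reals_def)

lemma ident:
  assumes u: "norm u < 1/4"
  shows "\<exists>B'. (BB \<theta> has_field_derivative B') (at u) \<and>
           of_real (aa \<theta>) * BB \<theta> u + u * B' = u * (Qf \<theta> u powr of_real (bb \<theta>)) / (u - 1)\<^sup>2"
proof -
  define p where "p = (of_real pi :: complex)"
  define t where "t = (of_real \<theta> :: complex)"
  have pne: "p \<noteq> 0" using pi_gt_zero by (simp add: p_def)
  have ptne: "p + t \<noteq> 0"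
  proof -
    have "p + t = of_real (pi + \<theta>)" by (simp add: p_def t_def)
    then show ?thesis using pi_facts by (metis of_real_eq_0_iff less_irrefl)
  qed
  define Q where "Q = Qf \<theta> u"
  have Qre: "0 < Re Q" using Qf_Re[OF u] by (simp add: Q_def)
  have Qne: "Q \<noteq> 0" using Qre by auto
  have Qeq: "Qf \<theta> = (\<lambda>x. (p * (x - 2)\<^sup>2 + t * x\<^sup>2) / (p + t))"
    by (simp add: fun_eq_iff Qf_def p_def t_def algebra_simps)
  define Qd where "Qd = (2 * p * (u - 2) + 2 * t * u) / (p + t)"
  have dQ: "(Qf \<theta> has_field_derivative Qd) (at u)"
  proof -
    have "((\<lambda>x. p * (x - 2)\<^sup>2 + t * x\<^sup>2) has_field_derivative (p * (2 * (u - 2)) + t * (2 * u))) (at u)"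
      by (auto intro!: derivative_eq_intros)
    then have "((\<lambda>x. (p * (x - 2)\<^sup>2 + t * x\<^sup>2) / (p + t)) has_field_derivative (p * (2 * (u - 2)) + t * (2 * u)) / (p + t)) (at u)"
      by (rule DERIV_cdivide)
    moreover have "(p * (2 * (u - 2)) + t * (2 * u)) = (2 * p * (u - 2) + 2 * t * u)" by (simp add: algebra_simps)
    ultimately show ?thesis unfolding Qeq Qd_def by (simp only:)
  qed
  define bc where "bc = (of_real (bb \<theta>) :: complex)"
  define ec where "ec = (of_real (ee \<theta>) :: complex)"
  define E where "E = Q powr (- ec)"
  have bc1: "bc = 1 + (- ec)" using basics by (simp add: bc_def ec_def)
  have Qb: "Q powr bc = Q * E" unfolding bc1 powr_add E_def by simp
  have Qb1: "Q powr (bc - 1) = E" unfolding bc1 E_def by simp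
  have dQb: "((\<lambda>x. Qf \<theta> x powr bc) has_field_derivative (bc * Q powr (bc - 1)) * Qd) (at u)"
    using DERIV_chain'[OF dQ has_field_derivative_powr[OF notnonpos[OF Qre[unfolded Q_def]]]]
    by (simp add: Q_def)
  have nl: "norm (l1 \<theta>) < 1" "norm (l2 \<theta>) < 1" using norm_l by auto
  have nu: "norm u < 1" using u by simp
  have a1pos: "0 < aa \<theta> + 1" using basics by simp
  obtain S1' where dS1: "(Sg (aa \<theta>) (ee \<theta>) (l1 \<theta>) (l2 \<theta>) has_field_derivative S1') (at u)"
    and hS1: "of_real (aa \<theta>) * Sg (aa \<theta>) (ee \<theta>) (l1 \<theta>) (l2 \<theta>) u + u * S1'
             = of_real (aa \<theta>) * ((1 - l1 \<theta> * u) powr (- ec) * (1 - l2 \<theta> * u) powr (- ec))"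
    using Sg_deriv[OF basics(1) basics(2) basics(3) nl nu] unfolding ec_def by blast
  obtain S2' where dS2: "(Sg (aa \<theta> + 1) (ee \<theta>) (l2 \<theta>) (l1 \<theta>) has_field_derivative S2') (at u)"
    and hS2: "of_real (aa \<theta> + 1) * Sg (aa \<theta> + 1) (ee \<theta>) (l2 \<theta>) (l1 \<theta>) u + u * S2'
             = of_real (aa \<theta> + 1) * ((1 - l2 \<theta> * u) powr (- ec) * (1 - l1 \<theta> * u) powr (- ec))"
    using Sg_deriv[OF a1pos basics(2) basics(3) nl(2) nl(1) nu] unfolding ec_def by blast
  define MC where "MC = (of_real (((pi + \<theta>) / (4 * pi)) powr (- ee \<theta>)) :: complex)"
  have P1: "(1 - l1 \<theta> * u) powr (- ec) * (1 - l2 \<theta> * u) powr (- ec) = MC * E"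
    using P_eq[OF u] by (simp add: MC_def E_def ec_def Q_def)
  have P2: "(1 - l2 \<theta> * u) powr (- ec) * (1 - l1 \<theta> * u) powr (- ec) = MC * E"
    using P1 by (simp add: mult.commute)
  define KMC where "KMC = (of_real (2 * pi / ((pi + \<theta>) * (2 * pi - \<theta>))) :: complex)"
  have hK: "KK \<theta> * MC = KMC"
    unfolding KK_def MC_def KMC_def Kconst[symmetric] by simp
  have u1: "u - 1 \<noteq> 0" using u by auto
  define c1 where "c1 = - 2 * (of_real (2 * pi - \<theta>) :: complex)"
  define c2 where "c2 = (of_real (pi + \<theta>) :: complex)"
  have ar: "of_real (aa \<theta>) = (p - t) / p" using pne by (simp add: aa_def p_def t_def field_simps)
  have br: "bc = (p + t) / (2 * p)" using pne by (simp add: bb_def bc_def p_def t_def field_simps)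
  have k1: "KMC * (c1 * of_real (aa \<theta>)) = - (4 * (p - t)) / (p + t)"
  proof -
    have ne: "pi + \<theta> \<noteq> 0" "2 * pi - \<theta> \<noteq> 0" "pi \<noteq> 0" using pi_facts pi_gt_zero by auto
    have g: "\<And>x y c::real. x \<noteq> 0 \<Longrightarrow> y \<noteq> 0 \<Longrightarrow> 2 * pi / (x * y) * (- 2 * y * c) = - 4 * (pi * c) / x"
      by (simp add: field_simps)
    have e1: "2 * pi / ((pi + \<theta>) * (2 * pi - \<theta>)) * (- 2 * (2 * pi - \<theta>) * aa \<theta>) = - 4 * (pi * aa \<theta>) / (pi + \<theta>)"
      by (rule g[OF ne(1,2)])
    have e2: "pi * aa \<theta> = pi - \<theta>" using ne by (simp add: aa_def field_simps)
    have "2 * pi / ((pi + \<theta>) * (2 * pi - \<theta>)) * (- 2 * (2 * pi - \<theta>) * aa \<theta>) = - (4 * (pi - \<theta>)) / (pi + \<theta>)"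
      unfolding e1 e2 by simp
    then have "(of_real (2 * pi / ((pi + \<theta>) * (2 * pi - \<theta>)) * (- 2 * (2 * pi - \<theta>) * aa \<theta>)) :: complex)
               = of_real (- (4 * (pi - \<theta>)) / (pi + \<theta>))" by simp
    then show ?thesis by (simp add: KMC_def c1_def p_def t_def)
  qed
  have k2: "KMC * (c2 * of_real (aa \<theta> + 1)) = 2"
  proof -
    have ne: "pi + \<theta> \<noteq> 0" "2 * pi - \<theta> \<noteq> 0" "pi \<noteq> 0" using pi_facts pi_gt_zero by auto
    have g: "\<And>x y c::real. x \<noteq> 0 \<Longrightarrow> y \<noteq> 0 \<Longrightarrow> 2 * pi / (x * y) * (x * c) = 2 * (pi * c) / y"
      by (simp add: field_simps)
    have e1: "2 * pi / ((pi + \<theta>) * (2 * pi - \<theta>)) * ((pi + \<theta>) * (aa \<theta> + 1)) = 2 * (pi * (aa \<theta> + 1)) / (2 * pi - \<theta>)"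
      by (rule g[OF ne(1,2)])
    have e2: "pi * (aa \<theta> + 1) = 2 * pi - \<theta>" using ne by (simp add: aa_def field_simps)
    have "2 * pi / ((pi + \<theta>) * (2 * pi - \<theta>)) * ((pi + \<theta>) * (aa \<theta> + 1)) = 2"
      unfolding e1 e2 using ne(2) by (simp add: field_simps)
    then have "(of_real (2 * pi / ((pi + \<theta>) * (2 * pi - \<theta>)) * ((pi + \<theta>) * (aa \<theta> + 1))) :: complex) = 2"
      by (metis of_real_numeral)
    then show ?thesis unfolding KMC_def c2_def of_real_mult[symmetric] .
  qed
  have hP: "- of_real (aa \<theta>) * Q - u * bc * Qd + (KMC * (c1 * of_real (aa \<theta>)) + KMC * (c2 * of_real (aa \<theta> + 1)) * u) * (u - 1) = 0"
    unfolding k1 k2 unfolding ar br Q_def Qeq Qd_def by (rule poly_id[OF pne ptne])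
  have dden: "((\<lambda>x. x - 1) has_field_derivative 1 - 0) (at u)"
    by (rule Deriv.field_differentiable_diff[OF DERIV_ident DERIV_const])
  have dq: "((\<lambda>x. Qf \<theta> x powr bc / (x - 1)) has_field_derivative
              ((bc * Q powr (bc - 1)) * Qd * (u - 1) - Qf \<theta> u powr bc * (1 - 0)) / ((u - 1) * (u - 1))) (at u)"
    by (rule DERIV_divide[OF dQb dden u1])
  have dm: "((\<lambda>x. x * Sg (aa \<theta> + 1) (ee \<theta>) (l2 \<theta>) (l1 \<theta>) x) has_field_derivative
              1 * Sg (aa \<theta> + 1) (ee \<theta>) (l2 \<theta>) (l1 \<theta>) u + S2' * u) (at u)"
    by (rule DERIV_mult[OF DERIV_ident dS2])
  have dB: "((\<lambda>x. - (Qf \<theta> x powr bc / (x - 1)) + KK \<theta> * (c1 * Sg (aa \<theta>) (ee \<theta>) (l1 \<theta>) (l2 \<theta>) x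
               + c2 * (x * Sg (aa \<theta> + 1) (ee \<theta>) (l2 \<theta>) (l1 \<theta>) x))) has_field_derivative
            - (((bc * Q powr (bc - 1)) * Qd * (u - 1) - Qf \<theta> u powr bc * (1 - 0)) / ((u - 1) * (u - 1)))
            + KK \<theta> * (c1 * S1' + c2 * (1 * Sg (aa \<theta> + 1) (ee \<theta>) (l2 \<theta>) (l1 \<theta>) u + S2' * u))) (at u)"
    by (intro Deriv.field_differentiable_add Deriv.field_differentiable_minus dq DERIV_cmult dS1 dm)
  have BBeq: "BB \<theta> = (\<lambda>x. - (Qf \<theta> x powr bc / (x - 1)) + KK \<theta> * (c1 * Sg (aa \<theta>) (ee \<theta>) (l1 \<theta>) (l2 \<theta>) x
               + c2 * (x * Sg (aa \<theta> + 1) (ee \<theta>) (l2 \<theta>) (l1 \<theta>) x)))"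
    by (simp add: fun_eq_iff BB_def bc_def c1_def c2_def)
  have fa: "of_real (aa \<theta>) * (- (Q * E / (u - 1)) + KK \<theta> * (c1 * Sg (aa \<theta>) (ee \<theta>) (l1 \<theta>) (l2 \<theta>) u + c2 * (u * Sg (aa \<theta> + 1) (ee \<theta>) (l2 \<theta>) (l1 \<theta>) u)))
       + u * (- ((bc * E * Qd * (u - 1) - Q * E * (1 - 0)) / ((u - 1) * (u - 1)))
              + KK \<theta> * (c1 * S1' + c2 * (1 * Sg (aa \<theta> + 1) (ee \<theta>) (l2 \<theta>) (l1 \<theta>) u + S2' * u)))
       = u * (Q * E) / (u - 1)\<^sup>2"
    by (rule final_alg[OF u1 _ _ _ hK hP]) (use hS1 hS2 P1 P2 in auto)
  show ?thesis
    apply (rule exI[of _ "- (((bc * Q powr (bc - 1)) * Qd * (u - 1) - Qf \<theta> u powr bc * (1 - 0)) / ((u - 1) * (u - 1)))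
            + KK \<theta> * (c1 * S1' + c2 * (1 * Sg (aa \<theta> + 1) (ee \<theta>) (l2 \<theta>) (l1 \<theta>) u + S2' * u))"])
    apply (rule conjI)
    subgoal unfolding BBeq by (rule dB)
    subgoal using fa unfolding BBeq Qb1 by (simp add: Q_def[symmetric] Qb bc_def[symmetric])
    done
qed

end


context th begin

lemma integrand_eq:
  "integrand \<theta> \<zeta> = (\<zeta> + 1) powr of_real (aa \<theta>) * Qf \<theta> (\<zeta> + 1) powr of_real (bb \<theta>) / \<zeta>\<^sup>2"
proof -
  define p where "p = (of_real pi :: complex)"
  define t where "t = (of_real \<theta> :: complex)"
  have ptne: "p + t \<noteq> 0"
  proof -
    have "p + t = of_real (pi + \<theta>)" by (simp add: p_def t_def)
    then show ?thesis using pi_facts by (metis of_real_eq_0_iff less_irrefl)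
  qed
  have "\<zeta>\<^sup>2 - 2 * ((p - t) / (p + t)) * \<zeta> + 1 = (p * (\<zeta> - 1)\<^sup>2 + t * (\<zeta> + 1)\<^sup>2) / (p + t)"
  proof -
    have g: "\<And>v. v \<noteq> 0 \<Longrightarrow> v = p + t \<Longrightarrow> \<zeta>\<^sup>2 - 2 * ((p - t) / v) * \<zeta> + 1 = (p * (\<zeta> - 1)\<^sup>2 + t * (\<zeta> + 1)\<^sup>2) / v"
      by (simp add: field_simps power2_eq_square)
    show ?thesis by (rule g[OF ptne refl])
  qed
  moreover have "of_real ((pi - \<theta>) / (pi + \<theta>)) = (p - t) / (p + t)" by (simp add: p_def t_def)
  moreover have "Qf \<theta> (\<zeta> + 1) = (p * (\<zeta> - 1)\<^sup>2 + t * (\<zeta> + 1)\<^sup>2) / (p + t)"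
    by (simp add: Qf_def p_def t_def)
  ultimately show ?thesis by (simp add: integrand_def aa_def bb_def)
qed

lemma M1:
  assumes z: "norm z < 1" and w: "norm (z + 1) < 1/4"
  shows "f_int \<theta> z = (z + 1) powr of_real (aa \<theta>) * BB \<theta> (z + 1)"
proof -
  define w where "w = z + 1"
  define A where "A = (of_real (aa \<theta>) :: complex)"
  define W where "W = w powr A"
  define F where "F = (\<lambda>x. x powr A * (W * BB \<theta> (x * w)))"
  have Apos: "0 < Re A" using basics by (simp add: A_def)
  have nw: "norm w < 1/4" using w by (simp add: w_def)
  have cB: "isCont (BB \<theta>) u" if "norm u < 1/4" for u
    using ident[OF that] DERIV_isCont by blast
  have normtw: "norm (of_real t * w) < 1/4" if "t \<in> {0..1}" for t :: real
  proof -
    have "norm (of_real t * w) = \<bar>t\<bar> * norm w" by (simp add: norm_mult)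
    also have "\<dots> \<le> 1 * norm w" using that by (intro mult_right_mono) auto
    finally show ?thesis using nw by simp
  qed
  have cont: "continuous_on {0..1} (\<lambda>t. F (of_real t))"
    unfolding F_def
  proof (intro continuous_intros)
    show "continuous_on {0..1} (\<lambda>t. BB \<theta> (of_real t * w))"
    proof (intro continuous_at_imp_continuous_on ballI)
      fix t :: real assume "t \<in> {0..1}"
      show "isCont (\<lambda>t. BB \<theta> (of_real t * w)) t"
      proof (rule isCont_o2[where f="\<lambda>t. of_real t * w" and g="BB \<theta>"])
        show "isCont (\<lambda>t. of_real t * w) t" by (intro continuous_intros)
        show "isCont (BB \<theta>) (of_real t * w)" by (rule cB[OF normtw[OF \<open>t \<in> {0..1}\<close>]])
      qed
    qed
    show "{0..1} \<subseteq> {t. 0 \<le> Re (complex_of_real t) \<or> Im (complex_of_real t) \<noteq> 0}" by auto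
    show "\<And>t. t \<in> {0..1} \<Longrightarrow> complex_of_real t = 0 \<Longrightarrow> 0 < Re A" using Apos by auto
  qed
  have der: "((\<lambda>t. F (of_real t)) has_vector_derivative (integrand \<theta> (-1 + of_real t * w) * w)) (at t)"
    if t: "t \<in> {0<..<1}" for t :: real
  proof -
    define x0 where "x0 = (of_real t :: complex)"
    define u where "u = x0 * w"
    have nu: "norm u < 1/4" using normtw[of t] t by (simp add: u_def x0_def)
    obtain B' where dB: "(BB \<theta> has_field_derivative B') (at u)"
      and hB: "A * BB \<theta> u + u * B' = u * (Qf \<theta> u powr of_real (bb \<theta>)) / (u - 1)\<^sup>2"
      using ident[OF nu] unfolding A_def by blast
    have dBw: "((\<lambda>x. BB \<theta> (x * w)) has_field_derivative B' * (1 * w)) (at x0)"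
      using DERIV_chain'[OF DERIV_cmult_right[OF DERIV_ident, of w x0 UNIV] dB[unfolded u_def]] .
    have x0nn: "x0 \<notin> \<real>\<^sub>\<le>\<^sub>0" using t by (auto simp: x0_def nonpos_Reals_def)
    have dpow: "((\<lambda>x. x powr A) has_field_derivative A * x0 powr (A - 1)) (at x0)"
      by (rule has_field_derivative_powr[OF x0nn])
    have dF: "(F has_field_derivative (A * x0 powr (A - 1)) * (W * BB \<theta> (x0 * w)) + (W * (B' * (1 * w))) * x0 powr A) (at x0)"
      unfolding F_def by (rule DERIV_mult[OF dpow DERIV_cmult[OF dBw]])
    have x0ne: "x0 \<noteq> 0" using t by (simp add: x0_def)
    define Y where "Y = x0 powr (A - 1)"
    have xA: "x0 powr A = x0 * Y"
    proof -
      have "x0 powr A = x0 powr (1 + (A - 1))" by simp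
      also have "\<dots> = x0 * Y" unfolding powr_add Y_def using x0ne by simp
      finally show ?thesis .
    qed
    have uA: "u powr A = x0 powr A * W"
      unfolding u_def W_def using t by (intro powr_times_real_left) (auto simp: x0_def)
    have "(A * x0 powr (A - 1)) * (W * BB \<theta> (x0 * w)) + (W * (B' * (1 * w))) * x0 powr A
          = W * Y * (A * BB \<theta> u + u * B')"
      unfolding xA Y_def[symmetric] u_def by (simp add: algebra_simps)
    also have "\<dots> = W * Y * (u * (Qf \<theta> u powr of_real (bb \<theta>)) / (u - 1)\<^sup>2)" by (simp only: hB)
    also have "\<dots> = integrand \<theta> (-1 + of_real t * w) * w"
    proof -
      have "-1 + of_real t * w + 1 = u" by (simp add: u_def x0_def)
      moreover have "-1 + of_real t * w = u - 1" by (simp add: u_def x0_def)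
      ultimately have "integrand \<theta> (-1 + of_real t * w) = u powr A * Qf \<theta> u powr of_real (bb \<theta>) / (u - 1)\<^sup>2"
        unfolding integrand_eq A_def by simp
      then show ?thesis unfolding uA xA by (simp add: u_def algebra_simps)
    qed
    finally have "(F has_field_derivative integrand \<theta> (-1 + of_real t * w) * w) (at (of_real t))"
      using dF by (simp add: x0_def)
    then show ?thesis by (rule has_vector_derivative_real_field)
  qed
  have "((\<lambda>t. integrand \<theta> (-1 + of_real t * w) * w) has_integral (F (of_real 1) - F (of_real 0))) {0..1}"
    by (rule fundamental_theorem_of_calculus_interior[OF _ cont der]) auto
  moreover have "F (of_real 1) - F (of_real 0) = W * BB \<theta> w" by (simp add: F_def)
  ultimately have "((\<lambda>t. integrand \<theta> (-1 + of_real t * w) * w) has_integral W * BB \<theta> w) {0..1}"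
    by simp
  then have "integral {0..1} (\<lambda>t. integrand \<theta> (-1 + of_real t * w) * w) = W * BB \<theta> w"
    by (rule integral_unique)
  then show ?thesis by (simp add: f_int_def w_def W_def A_def)
qed

end


context th begin

lemma Re_factor_pos:
  fixes c w :: complex
  assumes "norm c \<le> 2 * sqrt pi" "norm w < 1/4"
  shows "0 < Re (2 * of_real (sqrt pi) - c * w)"
proof -
  have "Re (c * w) \<le> norm (c * w)" by (rule complex_Re_le_cmod)
  also have "\<dots> \<le> 2 * sqrt pi * (1/4)" unfolding norm_mult using assms by (intro mult_mono) auto
  finally have "Re (c * w) \<le> sqrt pi / 2" by simp
  moreover have "0 < sqrt pi" by simp
  moreover have "Re (2 * of_real (sqrt pi) - c * w) = 2 * sqrt pi - Re (c * w)" by simp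
  ultimately show ?thesis by linarith
qed

lemma delta_psi:
  assumes w: "norm (z + 1) < 1/4"
  shows "delta_fn \<theta> z / psi_fn \<theta> z = of_real ((pi + \<theta>) powr ee \<theta>)"
proof -
  define sp where "sp = (of_real (sqrt pi) :: complex)"
  define st where "st = (of_real (sqrt \<theta>) :: complex)"
  define f1 where "f1 = - sp * (z - 1) - \<i> * st * (z + 1)"
  define f2 where "f2 = - sp * (z - 1) + \<i> * st * (z + 1)"
  define ec where "ec = (of_real (ee \<theta>) :: complex)"
  have sqle: "sqrt \<theta> \<le> sqrt pi" using lt by simp
  have n1: "norm (sp + \<i> * st) \<le> 2 * sqrt pi"
  proof -
    have "norm (sp + \<i> * st) \<le> norm sp + norm (\<i> * st)" by (rule norm_triangle_ineq)
    also have "\<dots> = sqrt pi + sqrt \<theta>" using pos by (simp add: sp_def st_def norm_mult)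
    finally show ?thesis using sqle by linarith
  qed
  have n2: "norm (sp - \<i> * st) \<le> 2 * sqrt pi"
  proof -
    have "norm (sp - \<i> * st) \<le> norm sp + norm (\<i> * st)" by (rule norm_triangle_ineq4)
    also have "\<dots> = sqrt pi + sqrt \<theta>" using pos by (simp add: sp_def st_def norm_mult)
    finally show ?thesis using sqle by linarith
  qed
  have f1e: "f1 = 2 * of_real (sqrt pi) - (sp + \<i> * st) * (z + 1)" by (simp add: f1_def sp_def algebra_simps)
  have f2e: "f2 = 2 * of_real (sqrt pi) - (sp - \<i> * st) * (z + 1)" by (simp add: f2_def sp_def algebra_simps)
  have r1: "0 < Re f1" unfolding f1e by (rule Re_factor_pos[OF n1 w])
  have r2: "0 < Re f2" unfolding f2e by (rule Re_factor_pos[OF n2 w])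
  have sp2: "sp * sp = of_real pi" by (simp add: sp_def flip: of_real_mult)
  have st2: "st * st = of_real \<theta>" using pos by (simp add: st_def flip: of_real_mult)
  have prod: "f1 * f2 = of_real (pi + \<theta>) * Qf \<theta> (z + 1)"
  proof -
    have ne: "(of_real (pi + \<theta>) :: complex) \<noteq> 0" using pi_facts by (metis of_real_eq_0_iff less_irrefl)
    have "f1 * f2 = (sp * sp) * (z - 1)\<^sup>2 + (st * st) * (z + 1)\<^sup>2"
      by (simp add: f1_def f2_def algebra_simps power2_eq_square)
    also have "\<dots> = of_real pi * (z - 1)\<^sup>2 + of_real \<theta> * (z + 1)\<^sup>2" by (simp only: sp2 st2)
    also have "\<dots> = of_real (pi + \<theta>) * Qf \<theta> (z + 1)" using ne by (simp add: Qf_def)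
    finally show ?thesis .
  qed
  have Qre: "0 < Re (Qf \<theta> (z + 1))" by (rule Qf_Re[OF w])
  have psi: "psi_fn \<theta> z = Qf \<theta> (z + 1) powr ec" by (simp add: psi_fn_def Qf_def ec_def ee_def)
  have delta: "delta_fn \<theta> z = f1 powr ec * f2 powr ec"
    by (simp add: delta_fn_def f1_def f2_def sp_def st_def ec_def ee_def)
  also have "\<dots> = (f1 * f2) powr ec" by (rule powr_mult_Re_pos[symmetric, OF r1 r2])
  also have "\<dots> = of_real (pi + \<theta>) powr ec * Qf \<theta> (z + 1) powr ec"
    unfolding prod using pi_facts by (intro powr_times_real_left) auto
  also have "of_real (pi + \<theta>) powr ec = (of_real ((pi + \<theta>) powr ee \<theta>) :: complex)"
    unfolding ec_def using pi_facts by (intro powr_of_real) auto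
  finally have d: "delta_fn \<theta> z = of_real ((pi + \<theta>) powr ee \<theta>) * Qf \<theta> (z + 1) powr ec" .
  have "Qf \<theta> (z + 1) powr ec \<noteq> 0" using Qre by (auto simp: powr_def)
  then show ?thesis unfolding d psi by simp
qed

lemma M2:
  assumes z: "norm z < 1" and w: "norm (z + 1) < 1/4"
  shows "(z + 1) powr (of_real (1 - \<theta> / pi)) *
      ( - phi_fn \<theta> z / z
        + of_real (2 powr (\<theta> / pi) * pi powr ((pi + \<theta>) / (2 * pi))
                   / (2 * pi\<^sup>2 + pi * \<theta> - \<theta>\<^sup>2))
          * (delta_fn \<theta> z / psi_fn \<theta> z)
          * ( - 2 * of_real (2 * pi - \<theta>)
                * appell_F1 (of_real (1 - \<theta> / pi)) (of_real ((pi - \<theta>) / (2 * pi)))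
                    (of_real ((pi - \<theta>) / (2 * pi))) (of_real (2 - \<theta> / pi))
                    (xi_fn \<theta> z) (eta_fn \<theta> z)
              + of_real (pi + \<theta>) * (z + 1)
                * appell_F1 (of_real (2 - \<theta> / pi)) (of_real ((pi - \<theta>) / (2 * pi)))
                    (of_real ((pi - \<theta>) / (2 * pi))) (of_real (3 - \<theta> / pi))
                    (eta_fn \<theta> z) (xi_fn \<theta> z)))
      = (z + 1) powr of_real (aa \<theta>) * BB \<theta> (z + 1)"
proof -
  define w where "w = z + 1"
  have nw: "norm w < 1/4" using w by (simp add: w_def)
  have spne: "(of_real (sqrt pi) :: complex) \<noteq> 0" by simp
  have xi: "xi_fn \<theta> z = l1 \<theta> * w"
  proof -
    have "(of_real (sqrt pi) - \<i> * of_real (sqrt \<theta>)) / (2 * of_real (sqrt pi)) = l1 \<theta>"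
      using spne by (simp add: l1_def complex_eq_iff field_simps)
    then show ?thesis unfolding xi_fn_def w_def by (metis times_divide_eq_left mult.commute)
  qed
  have eta: "eta_fn \<theta> z = l2 \<theta> * w"
  proof -
    have "(of_real (sqrt pi) + \<i> * of_real (sqrt \<theta>)) / (2 * of_real (sqrt pi)) = l2 \<theta>"
      using spne by (simp add: l2_def complex_eq_iff field_simps)
    then show ?thesis unfolding eta_fn_def w_def by (metis times_divide_eq_left mult.commute)
  qed
  have nlw: "norm (l1 \<theta> * w) < 1" "norm (l2 \<theta> * w) < 1"
  proof -
    have "norm (l1 \<theta> * w) \<le> 3/4 * (1/4)" unfolding norm_mult using norm_l nw by (intro mult_mono) auto
    then show "norm (l1 \<theta> * w) < 1" by simp
    have "norm (l2 \<theta> * w) \<le> 3/4 * (1/4)" unfolding norm_mult using norm_l nw by (intro mult_mono) auto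
    then show "norm (l2 \<theta> * w) < 1" by simp
  qed
  have a1pos: "0 < aa \<theta> + 1" using basics by simp
  have F1a: "appell_F1 (of_real (1 - \<theta> / pi)) (of_real ((pi - \<theta>) / (2 * pi)))
                    (of_real ((pi - \<theta>) / (2 * pi))) (of_real (2 - \<theta> / pi))
                    (xi_fn \<theta> z) (eta_fn \<theta> z) = Sg (aa \<theta>) (ee \<theta>) (l1 \<theta>) (l2 \<theta>) w"
  proof -
    have "of_real (2 - \<theta> / pi) = of_real (aa \<theta>) + (1::complex)" by (simp add: aa_def)
    then show ?thesis unfolding xi eta
      using F1_Sg[OF basics(1) basics(2) basics(3) nlw] by (simp add: aa_def ee_def)
  qed
  have F1b: "appell_F1 (of_real (2 - \<theta> / pi)) (of_real ((pi - \<theta>) / (2 * pi)))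
                    (of_real ((pi - \<theta>) / (2 * pi))) (of_real (3 - \<theta> / pi))
                    (eta_fn \<theta> z) (xi_fn \<theta> z) = Sg (aa \<theta> + 1) (ee \<theta>) (l2 \<theta>) (l1 \<theta>) w"
  proof -
    have e1: "of_real (3 - \<theta> / pi) = of_real (aa \<theta> + 1) + (1::complex)" by (simp add: aa_def)
    have e2: "of_real (2 - \<theta> / pi) = (of_real (aa \<theta> + 1) :: complex)" by (simp add: aa_def)
    show ?thesis unfolding xi eta e1 e2
      using F1_Sg[OF a1pos basics(2) basics(3) nlw(2) nlw(1)] by (simp add: ee_def)
  qed
  have phi: "phi_fn \<theta> z = Qf \<theta> w powr of_real (bb \<theta>)"
    by (simp add: phi_fn_def Qf_def bb_def w_def)
  have zw: "z = w - 1" by (simp add: w_def)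
  have K: "of_real (2 powr (\<theta> / pi) * pi powr ((pi + \<theta>) / (2 * pi)) / (2 * pi\<^sup>2 + pi * \<theta> - \<theta>\<^sup>2))
            * (delta_fn \<theta> z / psi_fn \<theta> z) = KK \<theta>"
    unfolding delta_psi[OF w] by (simp add: KK_def CC_def)
  show ?thesis
    unfolding K F1a F1b phi
    by (simp add: BB_def aa_def w_def mult.assoc)
qed

end

theorem mainTheorem1:
  fixes \<theta> :: real
  assumes "0 < \<theta>" and "\<theta> < pi"
  shows "\<exists>r>0. \<forall>z::complex. norm z < 1 \<and> norm (z + 1) < r \<longrightarrow>
    f_int \<theta> z =
      (z + 1) powr (of_real (1 - \<theta> / pi)) *
      ( - phi_fn \<theta> z / z
        + of_real (2 powr (\<theta> / pi) * pi powr ((pi + \<theta>) / (2 * pi))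
                   / (2 * pi\<^sup>2 + pi * \<theta> - \<theta>\<^sup>2))
          * (delta_fn \<theta> z / psi_fn \<theta> z)
          * ( - 2 * of_real (2 * pi - \<theta>)
                * appell_F1 (of_real (1 - \<theta> / pi)) (of_real ((pi - \<theta>) / (2 * pi)))
                    (of_real ((pi - \<theta>) / (2 * pi))) (of_real (2 - \<theta> / pi))
                    (xi_fn \<theta> z) (eta_fn \<theta> z)
              + of_real (pi + \<theta>) * (z + 1)
                * appell_F1 (of_real (2 - \<theta> / pi)) (of_real ((pi - \<theta>) / (2 * pi)))
                    (of_real ((pi - \<theta>) / (2 * pi))) (of_real (3 - \<theta> / pi))
                    (eta_fn \<theta> z) (xi_fn \<theta> z)))"
proof -
  interpret th \<theta> by unfold_locales (use assms in auto)
  show ?thesis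
  proof (rule exI[of _ "1/4"], intro conjI allI impI)
    fix z :: complex assume h: "norm z < 1 \<and> norm (z + 1) < 1/4"
    then have h1: "norm z < 1" and h2: "norm (z + 1) < 1/4" by auto
    show "f_int \<theta> z = (z + 1) powr (of_real (1 - \<theta> / pi)) *
      ( - phi_fn \<theta> z / z
        + of_real (2 powr (\<theta> / pi) * pi powr ((pi + \<theta>) / (2 * pi))
                   / (2 * pi\<^sup>2 + pi * \<theta> - \<theta>\<^sup>2))
          * (delta_fn \<theta> z / psi_fn \<theta> z)
          * ( - 2 * of_real (2 * pi - \<theta>)
                * appell_F1 (of_real (1 - \<theta> / pi)) (of_real ((pi - \<theta>) / (2 * pi)))
                    (of_real ((pi - \<theta>) / (2 * pi))) (of_real (2 - \<theta> / pi))
                    (xi_fn \<theta> z) (eta_fn \<theta> z)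
              + of_real (pi + \<theta>) * (z + 1)
                * appell_F1 (of_real (2 - \<theta> / pi)) (of_real ((pi - \<theta>) / (2 * pi)))
                    (of_real ((pi - \<theta>) / (2 * pi))) (of_real (3 - \<theta> / pi))
                    (eta_fn \<theta> z) (xi_fn \<theta> z)))"
      by (subst M1[OF h1 h2]) (rule M2[OF h1 h2, symmetric])
  qed simp
qed

end
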